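(* When the segment-based (GK) algorithm described in the context is run, after the deletion step at any time step $t$, the number of type-2 elements stored in QS is $O(\ell\log t)$.
   Context: A stream of elements from a totally ordered universe arrives one by one. Let $\ell=1/\varepsilon$ be an integer. The stream is partitioned into consecutive chunks of $\ell$ elements; time step $t$ is the arrival of the $t$-th chunk, and $t_0(x)$ is the time step in which $x$ arrives. The summary QS stores elements $e_1<\dots<e_s$ seen so far, each with integers $\mathrm{rmin}(e),\mathrm{rmax}(e)$; by convention $\mathrm{rmin}(e_0)=0$. An element $+\infty$, larger than all others, is inserted at the start of the stream and is always stored as $e_s$. Insert$(x)$: let $e_i$ be the smallest stored element with $e_i>x$; set $\mathrm{rmin}(x)=\mathrm{rmin}(e_{i-1})+1$, $\mathrm{rmax}(x)=\mathrm{rmax}(e_i)$, increase $\mathrm{rmin}(e_j),\mathrm{rmax}(e_j)$ by one for all $j\ge i$, and store $x$. Delete$(e_i)$: remove $e_i$, leaving all other values unchanged. Define $g_i=\mathrm{rmin}(e_i)-\mathrm{rmin}(e_{i-1})$ and $\Delta_i=\mathrm{rmax}(e_i)-\mathrm{rmin}(e_i)$. Band values: each element $x$ has an integer $\mathbf{v}(x)$: at time step $t_0(x)$, $\mathbf{v}(x)=0$; at each time step $t>t_0(x)$, if $t$ is a multiple of $2^{\mathbf{v}(x)}$ then $\mathbf{v}(x)$ is increased by one. The segment $\mathrm{seg}(e_i)$ of a stored element $e_i$ is the maximal set of consecutive stored elements $e_j,\dots,e_{i-1}$ all with band value strictly less than $\mathbf{v}(e_i)$; $g^*_i=g_i+\sum_{e_k\in\mathrm{seg}(e_i)}g_k$.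 Algorithm: at each time step $t$: (i) run Insert on each element of the chunk; (ii) (deletion step) while there is a stored $e_i$ ($i<s$) with $\mathbf{v}(e_i)\le\mathbf{v}(e_{i+1})$ and $g^*_i+g_{i+1}+\Delta_{i+1}\le t$, run Delete on $e_i$ and on every element of $\mathrm{seg}(e_i)$. After the deletion step at time $t$, a stored element $e_i$ ($i<s$) is type-1 if $\mathbf{v}(e_i)>\mathbf{v}(e_{i+1})$, and type-2 if it is not type-1 (in which case $g^*_i+g_{i+1}+\Delta_{i+1}>t$). *)

theory Defs
  imports Complex_Main
begin

text \<open>A stored entry: its key (None encodes the sentinel +infinity), rmin, rmax,
  and its arrival time step t0 (the sentinel has t0 = 0).\<close>
datatype 'a entry = Entry (key: "'a option") (rmin: nat) (rmax: nat) (birth: nat)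

fun bandv :: "nat \<Rightarrow> nat \<Rightarrow> nat" where
  "bandv t0 0 = 0"
| "bandv t0 (Suc t) =
     (if Suc t \<le> t0 then 0
      else (let v = bandv t0 t in if Suc t mod 2 ^ v = 0 then v + 1 else v))"

definition band :: "nat \<Rightarrow> 'a entry \<Rightarrow> nat" where
  "band t e = bandv (birth e) t"

definition above :: "'a::linorder \<Rightarrow> 'a entry \<Rightarrow> bool" where
  "above x e = (case key e of None \<Rightarrow> True | Some y \<Rightarrow> x < y)"

text \<open>Stored elements e_1 < ... < e_s are the list L with L!k = e_(k+1).\<close>
definition qs_insert :: "nat \<Rightarrow> 'a::linorder \<Rightarrow> 'a entry list \<Rightarrow> 'a entry list" where
  "qs_insert t x L =
     (let i = length (takeWhile (\<lambda>e. \<not> above x e) L);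
          pr = (if i = 0 then 0 else rmin (L ! (i - 1)));
          new = Entry (Some x) (pr + 1) (rmax (L ! i)) t
      in take i L @ [new] @
         map (\<lambda>e. Entry (key e) (rmin e + 1) (rmax e + 1) (birth e)) (drop i L))"

definition gg :: "'a entry list \<Rightarrow> nat \<Rightarrow> int" where
  "gg L k = int (rmin (L ! k)) - (if k = 0 then 0 else int (rmin (L ! (k - 1))))"

definition Dl :: "'a entry list \<Rightarrow> nat \<Rightarrow> int" where
  "Dl L k = int (rmax (L ! k)) - int (rmin (L ! k))"

text \<open>seg(e_k) = indices seg_start..k-1 (maximal run of predecessors with smaller band).\<close>
definition seg_start :: "nat \<Rightarrow> 'a entry list \<Rightarrow> nat \<Rightarrow> nat" where
  "seg_start t L k = (LEAST j. j \<le> k \<and> (\<forall>m. j \<le> m \<and> m < k \<longrightarrow> band t (L ! m) < band t (L ! k)))"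

definition gstar :: "nat \<Rightarrow> 'a entry list \<Rightarrow> nat \<Rightarrow> int" where
  "gstar t L k = gg L k + (\<Sum>m\<in>{seg_start t L k..<k}. gg L m)"

definition del_step :: "nat \<Rightarrow> 'a entry list \<Rightarrow> 'a entry list \<Rightarrow> bool" where
  "del_step t L L' = (\<exists>k. k + 1 < length L \<and> band t (L ! k) \<le> band t (L ! (k + 1)) \<and>
       gstar t L k + gg L (k + 1) + Dl L (k + 1) \<le> int t \<and>
       L' = take (seg_start t L k) L @ drop (k + 1) L)"

definition chunk :: "(nat \<Rightarrow> 'a) \<Rightarrow> nat \<Rightarrow> nat \<Rightarrow> 'a list" where
  "chunk xs l t = map xs [(t - 1) * l..<t * l]"

text \<open>reached xs l t L: L is a possible content of QS after the deletion step of time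
  step t (any order of the nondeterministic deletions); t = 0 is the initial state.\<close>
inductive reached :: "(nat \<Rightarrow> 'a::linorder) \<Rightarrow> nat \<Rightarrow> nat \<Rightarrow> 'a entry list \<Rightarrow> bool"
  for xs l where
  init: "reached xs l 0 [Entry None 1 1 0]"
| step: "reached xs l t L \<Longrightarrow>
         L1 = fold (qs_insert (Suc t)) (chunk xs l (Suc t)) L \<Longrightarrow>
         (del_step (Suc t))\<^sup>*\<^sup>* L1 L2 \<Longrightarrow>
         \<not> (\<exists>L3. del_step (Suc t) L2 L3) \<Longrightarrow>
         reached xs l (Suc t) L2"

definition type1 :: "nat \<Rightarrow> 'a entry list \<Rightarrow> nat \<Rightarrow> bool" where
  "type1 t L k = (band t (L ! k) > band t (L ! (k + 1)))"

definition num_type2 :: "nat \<Rightarrow> 'a entry list \<Rightarrow> nat" where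
  "num_type2 t L = card {k. k + 1 < length L \<and> \<not> type1 t L k}"

end

theory Submission
  imports Defs
begin


definition bstep :: "nat \<Rightarrow> nat \<Rightarrow> nat" where
  "bstep T v = (if T mod 2 ^ v = 0 then Suc v else v)"

lemma bandv_Suc: "b \<le> t \<Longrightarrow> bandv b (Suc t) = bstep (Suc t) (bandv b t)"
  by (simp add: bstep_def Let_def)

lemma bandv_zero: "t \<le> b \<Longrightarrow> bandv b t = 0"
  by (induction t) auto

lemma bstep_mono: "v1 \<le> v2 \<Longrightarrow> bstep T v1 \<le> bstep T v2"
  unfolding bstep_def by (cases "v1 = v2") auto

lemma bstep_ge: "v \<le> bstep T v" "bstep T v \<le> Suc v"
  unfolding bstep_def by auto

lemma bandv_anti: "b1 \<le> b2 \<Longrightarrow> bandv b2 t \<le> bandv b1 t"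
proof (induction t)
  case 0 then show ?case by simp
next
  case (Suc t)
  show ?case
  proof (cases "Suc t \<le> b2")
    case True then show ?thesis by (simp add: bandv_zero)
  next
    case False
    then have "b2 \<le> t" "b1 \<le> t" using Suc.prems by auto
    then show ?thesis using Suc bandv_Suc bstep_mono by metis
  qed
qed

lemma dvd_gap: "(d::nat) dvd a \<Longrightarrow> d dvd c \<Longrightarrow> a < c \<Longrightarrow> a + d \<le> c"
proof -
  assume "d dvd a" "d dvd c" "a < c"
  then obtain x y where "a = d * x" "c = d * y" by (auto elim!: dvdE)
  with \<open>a < c\<close> have "x < y" by auto
  then have "d * (x + 1) \<le> d * y" by (intro mult_le_mono2) auto
  then show ?thesis using \<open>a = d * x\<close> \<open>c = d * y\<close> by simp
qed

lemma bandv_low_aux: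
  "b \<le> t \<Longrightarrow> 1 \<le> bandv b t \<Longrightarrow> \<exists>r\<le>t. 2 ^ (bandv b t - 1) dvd r \<and> b + 2 ^ (bandv b t - 1) \<le> r"
proof (induction t)
  case 0 then show ?case by simp
next
  case (Suc t)
  show ?case
  proof (cases "Suc t \<le> b")
    case True then show ?thesis using Suc.prems by (simp add: bandv_zero)
  next
    case False
    then have bt: "b \<le> t" by simp
    define v where "v = bandv b t"
    have eq: "bandv b (Suc t) = bstep (Suc t) v" using bandv_Suc[OF bt] v_def by simp
    show ?thesis
    proof (cases "Suc t mod 2 ^ v = 0")
      case True
      then have bs: "bandv b (Suc t) = Suc v" using eq by (simp add: bstep_def)
      have d: "2 ^ v dvd Suc t" using True by auto
      have "b + 2 ^ v \<le> Suc t"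
      proof (cases "v = 0")
        case True then show ?thesis using bt by simp
      next
        case False
        then obtain r where r: "r \<le> t" "2 ^ (v - 1) dvd r" "b + 2 ^ (v - 1) \<le> r"
          using Suc.IH bt v_def by auto
        have "2 ^ (v - 1) dvd (2::nat) ^ v" using False by (simp add: le_imp_power_dvd)
        then have "2 ^ (v - 1) dvd Suc t" using d dvd_trans by blast
        then have "r + 2 ^ (v - 1) \<le> Suc t" using dvd_gap r by simp
        moreover have "(2::nat) ^ v = 2 ^ (v - 1) + 2 ^ (v - 1)" using False
          by (metis Suc_pred' bot_nat_0.not_eq_extremum mult_2 power_Suc)
        ultimately show ?thesis using r by simp
      qed
      then show ?thesis using bs d by auto
    next
      case False
      then have "bandv b (Suc t) = v" using eq by (simp add: bstep_def)
      then show ?thesis using Suc.IH bt v_def Suc.prems by (metis le_SucI)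
    qed
  qed
qed

lemma bandv_low: "b \<le> t \<Longrightarrow> 1 \<le> bandv b t \<Longrightarrow> b + 2 ^ (bandv b t - 1) \<le> t"
  using bandv_low_aux by fastforce

lemma bandv_up_aux:
  "b \<le> t \<Longrightarrow> t + 2 ^ bandv b t - t mod 2 ^ bandv b t + 1 \<le> b + 2 ^ Suc (bandv b t)"
proof (induction t)
  case 0 then show ?case by simp
next
  case (Suc t)
  show ?case
  proof (cases "Suc t \<le> b")
    case True then have "b = Suc t" using Suc.prems by simp
    then show ?thesis by (simp add: bandv_zero)
  next
    case False
    then have bt: "b \<le> t" by simp
    define v where "v = bandv b t"
    have IH: "t + 2 ^ v - t mod 2 ^ v + 1 \<le> b + 2 ^ Suc v" using Suc.IH bt v_def by simp
    have eq: "bandv b (Suc t) = bstep (Suc t) v" using bandv_Suc[OF bt] v_def by simp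
    have lt: "t mod 2 ^ v < 2 ^ v" by simp
    show ?thesis
    proof (cases "Suc t mod 2 ^ v = 0")
      case True
      then have bs: "bandv b (Suc t) = Suc v" using eq by (simp add: bstep_def)
      have "Suc (t mod 2 ^ v) = 2 ^ v" using True by (metis mod_Suc nat.distinct(1))
      then have "Suc t + 1 \<le> b + 2 ^ Suc v" using IH by simp
      then show ?thesis using bs by simp
    next
      case False
      then have bs: "bandv b (Suc t) = v" using eq by (simp add: bstep_def)
      have "Suc t mod 2 ^ v = Suc (t mod 2 ^ v)" using False by (metis mod_Suc)
      then show ?thesis using bs IH lt by simp
    qed
  qed
qed

lemma bandv_up: "b \<le> t \<Longrightarrow> t + 2 \<le> b + 2 ^ Suc (bandv b t)"
proof -
  assume "b \<le> t"
  from bandv_up_aux[OF this] have "t + 2 ^ bandv b t - t mod 2 ^ bandv b t + 1 \<le> b + 2 ^ Suc (bandv b t)" .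
  moreover have "t mod 2 ^ bandv b t < 2 ^ bandv b t" by simp
  ultimately show ?thesis by linarith
qed



definition incE :: "'a entry \<Rightarrow> 'a entry" where
  "incE e = Entry (key e) (rmin e + 1) (rmax e + 1) (birth e)"

lemma qs_insert_eq: "qs_insert T x L =
   (let i = length (takeWhile (\<lambda>e. \<not> above x e) L) in
    take i L @ [Entry (Some x) ((if i = 0 then 0 else rmin (L ! (i - 1))) + 1) (rmax (L ! i)) T] @ map incE (drop i L))"
  unfolding qs_insert_def incE_def Let_def by simp

context
  fixes L L' :: "'a entry list" and i :: nat and new :: "'a entry"
  assumes iL: "i < length L"
    and L': "L' = take i L @ [new] @ map incE (drop i L)"
    and nr: "rmin new = (if i = 0 then 0 else rmin (L ! (i - 1))) + 1"
    and nx: "rmax new = rmax (L ! i)"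
begin

lemma ins_len: "length L' = Suc (length L)"
  using iL L' by simp

lemma ins_nth_lt: "k < i \<Longrightarrow> L' ! k = L ! k"
  using iL L' by (simp add: nth_append)

lemma ins_nth_eq: "L' ! i = new"
  using iL L' by (simp add: nth_append)

lemma ins_nth_gt: "i < k \<Longrightarrow> k < length L' \<Longrightarrow> L' ! k = incE (L ! (k - 1))"
  using iL L' by (simp add: nth_append min_def)

lemma ins_gg: "k < length L' \<Longrightarrow>
   gg L' k = (if k < i then gg L k else if k = i then 1 else gg L (k - 1))"
proof -
  assume k: "k < length L'"
  consider "k < i" | "k = i" | "k = Suc i" | "Suc i < k" by linarith
  then show ?thesis
  proof cases
    case 1 then show ?thesis using ins_nth_lt by (simp add: gg_def)
  next
    case 2 then show ?thesis using ins_nth_lt ins_nth_eq nr by (simp add: gg_def)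
  next
    case 3 then show ?thesis using ins_nth_gt[of "Suc i"] ins_nth_eq nr k
      by (simp add: gg_def incE_def)
  next
    case 4 then show ?thesis using ins_nth_gt[of k] ins_nth_gt[of "k - 1"] k
      by (simp add: gg_def incE_def)
  qed
qed

lemma ins_Dl: "k < length L' \<Longrightarrow>
   Dl L' k = (if k < i then Dl L k else if k = i then gg L i + Dl L i - 1 else Dl L (k - 1))"
proof -
  assume k: "k < length L'"
  consider "k < i" | "k = i" | "i < k" by linarith
  then show ?thesis
  proof cases
    case 1 then show ?thesis using ins_nth_lt by (simp add: Dl_def)
  next
    case 2 then show ?thesis using ins_nth_eq nr nx by (simp add: Dl_def gg_def)
  next
    case 3 then show ?thesis using ins_nth_gt[of k] k by (simp add: Dl_def incE_def)
  qed
qed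

lemma ins_birth: "k < length L' \<Longrightarrow>
   birth (L' ! k) = (if k < i then birth (L ! k) else if k = i then birth new else birth (L ! (k - 1)))"
  using ins_nth_lt ins_nth_eq ins_nth_gt by (simp add: incE_def)

lemma ins_last: "key (last L') = key (last L)"
proof -
  have "L \<noteq> []" using iL by auto
  have "L' \<noteq> []" using ins_len by auto
  then have "last L' = L' ! (length L' - 1)" by (simp add: last_conv_nth)
  also have "\<dots> = incE (L ! (length L - 1))" using ins_nth_gt[of "length L"] ins_len iL by simp
  finally show ?thesis using \<open>L \<noteq> []\<close> by (simp add: incE_def last_conv_nth)
qed

end

lemma ins_sum: "i \<le> n \<Longrightarrow>
  (\<Sum>k<Suc n. (if k < i then h k else if k = i then a else h (k - 1))) = a + (\<Sum>k<n. h k :: int)"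
proof (induction n rule: dec_induct)
  case base then show ?case by simp
next
  case (step n) then show ?case by simp
qed



lemma gg_telescope: "j \<le> n \<Longrightarrow>
  (\<Sum>q\<in>{j..n}. gg L q) = int (rmin (L ! n)) - (if j = 0 then 0 else int (rmin (L ! (j - 1))))"
proof (induction n rule: dec_induct)
  case base then show ?case by (simp add: gg_def)
next
  case (step n)
  have "{j..Suc n} = insert (Suc n) {j..n}" using step by auto
  then show ?case using step by (simp add: gg_def)
qed

lemma seg_start_props:
  "seg_start t L k \<le> k"
  "seg_start t L k \<le> m \<Longrightarrow> m < k \<Longrightarrow> band t (L ! m) < band t (L ! k)"
proof -
  let ?P = "\<lambda>j. j \<le> k \<and> (\<forall>m. j \<le> m \<and> m < k \<longrightarrow> band t (L ! m) < band t (L ! k))"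
  have "?P k" by auto
  then have "?P (seg_start t L k)" unfolding seg_start_def by (rule LeastI)
  then show "seg_start t L k \<le> k"
    "seg_start t L k \<le> m \<Longrightarrow> m < k \<Longrightarrow> band t (L ! m) < band t (L ! k)" by auto
qed

context
  fixes L L' :: "'a entry list" and j k :: nat
  assumes jk: "j \<le> k" and kL: "Suc k < length L"
    and L': "L' = take j L @ drop (Suc k) L"
begin

lemma del_len: "length L' = length L - (Suc k - j)"
  using jk kL L' by simp

lemma del_nth: "m < length L' \<Longrightarrow> L' ! m = (if m < j then L ! m else L ! (m + (Suc k - j)))"
  using jk kL L' by (auto simp: nth_append min_def intro!: arg_cong[where f="(!) L"])

lemma del_gg: "m < length L' \<Longrightarrow>
  gg L' m = (if m < j then gg L m else if m = j then (\<Sum>q\<in>{j..Suc k}. gg L q) else gg L (m + (Suc k - j)))"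
proof -
  assume m: "m < length L'"
  consider "m < j" | "m = j" | "j < m" by linarith
  then show ?thesis
  proof cases
    case 1 then show ?thesis using del_nth m by (simp add: gg_def)
  next
    case 2
    have "gg L' m = int (rmin (L ! Suc k)) - (if j = 0 then 0 else int (rmin (L ! (j - 1))))"
      using 2 del_nth[of m] del_nth[of "m - 1"] m jk by (simp add: gg_def)
    then show ?thesis using gg_telescope[of j "Suc k" L] 2 jk by simp
  next
    case 3
    then have "m - 1 + (Suc k - j) = m + (Suc k - j) - 1" using jk by simp
    then show ?thesis using 3 del_nth[of m] del_nth[of "m - 1"] m jk by (simp add: gg_def)
  qed
qed

lemma del_Dl: "m < length L' \<Longrightarrow> Dl L' m = (if m < j then Dl L m else Dl L (m + (Suc k - j)))"
  using del_nth by (simp add: Dl_def)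

lemma del_last: "last L' = last L"
  using L' kL by simp

end

lemma del_sum:
  assumes jk: "j \<le> k" and kn: "Suc k < n"
  shows "(\<Sum>m<n - (Suc k - j). (if m < j then h m else if m = j then a else h (m + (Suc k - j))))
       = (\<Sum>q<j. h q) + a + (\<Sum>q\<in>{Suc (Suc k)..<n}. h q :: int)"
    and "(\<Sum>q<n. h q) = (\<Sum>q<j. h q) + (\<Sum>q\<in>{j..Suc k}. h q) + (\<Sum>q\<in>{Suc (Suc k)..<n}. h q)"
proof -
  define d where "d = Suc k - j"
  define g where "g = (\<lambda>m. (if m < j then h m else if m = j then a else h (m + d)))"
  have n1: "Suc j \<le> n - d" using jk kn d_def by simp
  have "{..<n - d} = {..<j} \<union> {j} \<union> {Suc j..<n - d}" using n1 by auto
  then have "(\<Sum>m<n - d. g m) = (\<Sum>m\<in>{..<j} \<union> {j} \<union> {Suc j..<n - d}. g m)" by simp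
  also have "\<dots> = (\<Sum>m<j. g m) + g j + (\<Sum>m\<in>{Suc j..<n - d}. g m)"
    by (subst sum.union_disjoint, auto)+
  also have "(\<Sum>m<j. g m) = (\<Sum>m<j. h m)" by (simp add: g_def)
  also have "(\<Sum>m\<in>{Suc j..<n - d}. g m) = (\<Sum>m\<in>{Suc j..<n - d}. h (m + d))"
    by (rule sum.cong) (auto simp: g_def)
  also have "\<dots> = (\<Sum>q\<in>{Suc j + d..<n - d + d}. h q)"
    by (rule sum.shift_bounds_nat_ivl[symmetric])
  finally have "sum g {..<n - d} = sum h {..<j} + g j + sum h {Suc j + d..<n - d + d}" .
  moreover have "Suc j + d = Suc (Suc k)" "n - d + d = n" using jk kn d_def by auto
  ultimately show "(\<Sum>m<n - (Suc k - j). (if m < j then h m else if m = j then a else h (m + (Suc k - j))))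
       = (\<Sum>q<j. h q) + a + (\<Sum>q\<in>{Suc (Suc k)..<n}. h q)" unfolding d_def[symmetric] g_def[symmetric] by (simp add: g_def)
  have "{..<n} = {..<j} \<union> {j..Suc k} \<union> {Suc (Suc k)..<n}" using jk kn by auto
  then have "(\<Sum>q<n. h q) = (\<Sum>q\<in>{..<j} \<union> {j..Suc k} \<union> {Suc (Suc k)..<n}. h q)" by simp
  also have "\<dots> = (\<Sum>q\<in>{..<j} \<union> {j..Suc k}. h q) + (\<Sum>q\<in>{Suc (Suc k)..<n}. h q)"
    by (rule sum.union_disjoint) (use jk in auto)
  also have "(\<Sum>q\<in>{..<j} \<union> {j..Suc k}. h q) = (\<Sum>q<j. h q) + (\<Sum>q\<in>{j..Suc k}. h q)"
    by (rule sum.union_disjoint) auto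
  finally show "(\<Sum>q<n. h q) = (\<Sum>q<j. h q) + (\<Sum>q\<in>{j..Suc k}. h q) + (\<Sum>q\<in>{Suc (Suc k)..<n}. h q)" .
qed



definition cw :: "nat \<Rightarrow> nat \<Rightarrow> int" where "cw l b = (if b = 0 then 1 else int l)"
definition NB :: "nat \<Rightarrow> nat \<Rightarrow> nat \<Rightarrow> nat \<Rightarrow> int" where
  "NB l T u w = (\<Sum>b<u. if bandv b T < w then cw l b else 0)"
definition msum :: "nat \<Rightarrow> 'a entry list \<Rightarrow> nat \<Rightarrow> int" where
  "msum T L w = (\<Sum>k<length L. if bandv (birth (L ! k)) T < w then gg L k else 0)"
definition eok :: "nat \<Rightarrow> 'a entry list \<Rightarrow> nat \<Rightarrow> bool" where
  "eok T L k = (0 \<le> gg L k \<and> gg L k + Dl L k \<le> int T \<and> Dl L k \<le> int (birth (L ! k)) \<and> birth (L ! k) \<le> T)"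
definition InvS :: "nat \<Rightarrow> nat \<Rightarrow> nat \<Rightarrow> 'a entry list \<Rightarrow> bool" where
  "InvS l T c L = (L \<noteq> [] \<and> key (last L) = None \<and> (\<forall>k<length L. eok T L k) \<and>
     (\<forall>w. msum T L w \<le> NB l T T w + (if 0 < w then int c else 0)))"
definition InvR :: "nat \<Rightarrow> nat \<Rightarrow> 'a entry list \<Rightarrow> bool" where
  "InvR l t L = (L \<noteq> [] \<and> key (last L) = None \<and> (\<forall>k<length L. eok (Suc t) L k \<and> birth (L ! k) \<le> t) \<and>
     (\<forall>w. msum t L w \<le> NB l t (Suc t) w))"

lemma takeWhile_less: "\<exists>x\<in>set xs. \<not> P x \<Longrightarrow> length (takeWhile P xs) < length xs"
  by (induction xs) auto

lemma insert_inv: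
  assumes inv: "InvS l T c (L :: 'a::linorder entry list)"
  shows "InvS l T (Suc c) (qs_insert T x L)"
proof -
  define i where "i = length (takeWhile (\<lambda>e. \<not> above x e) L)"
  define new where "new = Entry (Some x) ((if i = 0 then 0 else rmin (L ! (i - 1))) + 1) (rmax (L ! i)) T"
  define L' where "L' = qs_insert T x L"
  have ne: "L \<noteq> []" and lk: "key (last L) = None" and ok: "\<And>k. k < length L \<Longrightarrow> eok T L k"
    and sm: "\<And>w. msum T L w \<le> NB l T T w + (if 0 < w then int c else 0)"
    using inv unfolding InvS_def by auto
  have "above x (last L)" using lk by (simp add: above_def)
  then have iL: "i < length L" unfolding i_def using ne by (intro takeWhile_less) auto
  have L'eq: "L' = take i L @ [new] @ map incE (drop i L)"
    unfolding L'_def qs_insert_eq i_def new_def Let_def by simp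
  have nr: "rmin new = (if i = 0 then 0 else rmin (L ! (i - 1))) + 1" by (simp add: new_def)
  have nx: "rmax new = rmax (L ! i)" by (simp add: new_def)
  note len = ins_len[OF iL L'eq nr nx]
  note G = ins_gg[OF iL L'eq nr nx]
  note D = ins_Dl[OF iL L'eq nr nx]
  note B = ins_birth[OF iL L'eq nr nx]
  have Bn: "birth new = T" by (simp add: new_def)
  have okL': "eok T L' k" if k: "k < length L'" for k
  proof -
    consider "k < i" | "k = i" | "i < k" by linarith
    then show ?thesis
    proof cases
      case 1 then show ?thesis using ok[of k] iL G[OF k] D[OF k] B[OF k] by (simp add: eok_def)
    next
      case 2 then show ?thesis using ok[of i] iL G[OF k] D[OF k] B[OF k] Bn by (simp add: eok_def)
    next
      case 3 then show ?thesis using ok[of "k - 1"] k len G[OF k] D[OF k] B[OF k] by (simp add: eok_def)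
    qed
  qed
  have msL': "msum T L' w \<le> NB l T T w + (if 0 < w then int (Suc c) else 0)" for w
  proof -
    define h where "h k = (if bandv (birth (L ! k)) T < w then gg L k else 0)" for k
    define a :: int where "a = (if 0 < w then 1 else 0)"
    have "msum T L' w = (\<Sum>k<Suc (length L). (if k < i then h k else if k = i then a else h (k - 1)))"
      unfolding msum_def len
      by (rule sum.cong) (auto simp: h_def a_def G B Bn bandv_zero len)
    also have "\<dots> = a + msum T L w" using ins_sum[of i "length L" h a] iL
      by (simp add: msum_def h_def)
    finally show ?thesis using sm[of w] by (cases "w = 0") (simp_all add: a_def)
  qed
  have "L' \<noteq> []" using len by auto
  moreover have "key (last L') = None" using ins_last[OF iL L'eq nr nx] lk by simp
  ultimately show ?thesis using okL' msL' unfolding InvS_def L'_def by auto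
qed

lemma sum_split_k: "j \<le> k \<Longrightarrow> sum f {j..Suc k} = f k + sum f {j..<k} + (f (Suc k) :: int)"
proof -
  assume "j \<le> k"
  then have "{j..Suc k} = insert (Suc k) (insert k {j..<k})" by auto
  then show ?thesis by simp
qed

lemma delete_inv:
  assumes inv: "InvS l T c (L :: 'a entry list)" and ds: "del_step T L L'"
  shows "InvS l T c L'"
proof -
  have ne: "L \<noteq> []" and lk: "key (last L) = None" and ok: "\<And>k. k < length L \<Longrightarrow> eok T L k"
    and sm: "\<And>w. msum T L w \<le> NB l T T w + (if 0 < w then int c else 0)"
    using inv unfolding InvS_def by auto
  obtain k where kL: "k + 1 < length L" and bk: "band T (L ! k) \<le> band T (L ! (k + 1))"
    and cond: "gstar T L k + gg L (k + 1) + Dl L (k + 1) \<le> int T"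
    and L'eq: "L' = take (seg_start T L k) L @ drop (k + 1) L"
    using ds unfolding del_step_def by blast
  define j where "j = seg_start T L k"
  have jk: "j \<le> k" using seg_start_props(1) j_def by simp
  have kL': "Suc k < length L" using kL by simp
  have L'e: "L' = take j L @ drop (Suc k) L" using L'eq j_def by simp
  define d where "d = Suc k - j"
  note len = del_len[OF jk kL' L'e]
  note N = del_nth[OF jk kL' L'e]
  note G = del_gg[OF jk kL' L'e]
  note D = del_Dl[OF jk kL' L'e]
  define B where "B q = bandv (birth (L ! q)) T" for q
  have Ble: "B q \<le> B (Suc k)" if "j \<le> q" "q \<le> Suc k" for q
  proof -
    show ?thesis
    proof (cases "q < k")
      case True then have "band T (L ! q) < band T (L ! k)" using seg_start_props(2) that j_def by blast
      then show ?thesis using bk by (simp add: B_def band_def)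
    next
      case False
      then have "q = k \<or> q = Suc k" using that by linarith
      then show ?thesis using bk by (auto simp: B_def band_def)
    qed
  qed
  have gnn: "\<And>q. q < length L \<Longrightarrow> 0 \<le> gg L q" using ok by (simp add: eok_def)
  have S: "(\<Sum>q\<in>{j..Suc k}. gg L q) = gstar T L k + gg L (k + 1)"
    using sum_split_k[OF jk, of "gg L"] unfolding gstar_def j_def by simp
  have okL': "eok T L' m" if m: "m < length L'" for m
  proof -
    consider "m < j" | "m = j" | "j < m" by linarith
    then show ?thesis
    proof cases
      case 1 then have "m < length L" using jk kL' by simp
      then show ?thesis using 1 ok[of m] G[OF m] D[OF m] N[OF m] by (simp add: eok_def)
    next
      case 2
      have "0 \<le> (\<Sum>q\<in>{j..Suc k}. gg L q)" using gnn kL' by (intro sum_nonneg) auto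
      then show ?thesis using 2 ok[of "Suc k"] kL' G[OF m] D[OF m] N[OF m] S cond jk
        by (simp add: eok_def)
    next
      case 3
      have "m + (Suc k - j) < length L" using m len jk by simp
      then show ?thesis using 3 ok[of "m + (Suc k - j)"] G[OF m] D[OF m] N[OF m] by (simp add: eok_def)
    qed
  qed
  have msL': "msum T L' w \<le> NB l T T w + (if 0 < w then int c else 0)" for w
  proof -
    define h where "h q = (if B q < w then gg L q else 0)" for q
    define a where "a = (if B (Suc k) < w then (\<Sum>q\<in>{j..Suc k}. gg L q) else 0)"
    have "msum T L' w = (\<Sum>m<length L - (Suc k - j). (if m < j then h m else if m = j then a else h (m + (Suc k - j))))"
      unfolding msum_def len
      by (rule sum.cong) (use len in \<open>auto simp: h_def a_def G N B_def\<close>)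
    also have "\<dots> = (\<Sum>q<j. h q) + a + (\<Sum>q\<in>{Suc (Suc k)..<length L}. h q)"
      by (rule del_sum(1)[OF jk kL'])
    also have "\<dots> \<le> (\<Sum>q<j. h q) + (\<Sum>q\<in>{j..Suc k}. h q) + (\<Sum>q\<in>{Suc (Suc k)..<length L}. h q)"
    proof -
      have "a \<le> (\<Sum>q\<in>{j..Suc k}. h q)"
      proof (cases "B (Suc k) < w")
        case True
        then have "(\<Sum>q\<in>{j..Suc k}. h q) = (\<Sum>q\<in>{j..Suc k}. gg L q)"
          using Ble True by (intro sum.cong) (auto simp: h_def intro: le_less_trans)
        then show ?thesis using True a_def by simp
      next
        case False
        have "0 \<le> (\<Sum>q\<in>{j..Suc k}. h q)" using gnn kL' by (intro sum_nonneg) (auto simp: h_def)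
        then show ?thesis using False a_def by simp
      qed
      then show ?thesis by simp
    qed
    also have "\<dots> = msum T L w"
      unfolding msum_def using del_sum(2)[OF jk kL', of h] by (simp add: h_def B_def)
    finally show ?thesis using sm[of w] by simp
  qed
  have "L' \<noteq> []" using len kL' by auto
  moreover have "key (last L') = None" using del_last[OF jk kL' L'e] lk by simp
  ultimately show ?thesis using okL' msL' unfolding InvS_def by auto
qed


lemma fold_inv: "InvS l T c (L :: 'a::linorder entry list) \<Longrightarrow> InvS l T (c + length ys) (fold (qs_insert T) ys L)"
proof (induction ys arbitrary: c L)
  case Nil then show ?case by simp
next
  case (Cons y ys)
  from insert_inv[OF Cons.prems] have "InvS l T (Suc c) (qs_insert T y L)" .
  from Cons.IH[OF this] show ?case by simp
qed

lemma star_inv: "(del_step T)\<^sup>*\<^sup>* L1 L2 \<Longrightarrow> InvS l T c L1 \<Longrightarrow> InvS l T c L2"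
  by (induction rule: rtranclp_induct) (auto intro: delete_inv)

lemma bstep_thr: "\<exists>w'. \<forall>v. (bstep T v < w) = (v < w')"
proof -
  define w' where "w' = (LEAST v. \<not> bstep T v < w)"
  have ex: "\<not> bstep T w < w" using bstep_ge(1)[of w T] by simp
  have "\<not> bstep T w' < w" unfolding w'_def by (rule LeastI[of _ w], rule ex)
  have "(bstep T v < w) = (v < w')" for v
  proof
    assume "bstep T v < w"
    show "v < w'"
    proof (rule ccontr)
      assume "\<not> v < w'"
      then have "bstep T w' \<le> bstep T v" by (intro bstep_mono) simp
      then show False using \<open>bstep T v < w\<close> \<open>\<not> bstep T w' < w\<close> by simp
    qed
  next
    assume "v < w'"
    then show "bstep T v < w" using not_less_Least[of v "\<lambda>v. \<not> bstep T v < w"] unfolding w'_def by blast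
  qed
  then show ?thesis by blast
qed

lemma R_to_S: "InvR l t (L :: 'a entry list) \<Longrightarrow> InvS l (Suc t) 0 L"
proof -
  assume inv: "InvR l t L"
  have ok: "\<And>k. k < length L \<Longrightarrow> eok (Suc t) L k \<and> birth (L ! k) \<le> t"
    and sm: "\<And>w. msum t L w \<le> NB l t (Suc t) w" using inv unfolding InvR_def by auto
  have "msum (Suc t) L w \<le> NB l (Suc t) (Suc t) w" for w
  proof -
    obtain w' where w': "\<And>v. (bstep (Suc t) v < w) = (v < w')" using bstep_thr by blast
    have eqb: "(bandv b (Suc t) < w) = (bandv b t < w')" if "b \<le> t" for b
      using bandv_Suc[OF that] w' by simp
    have "msum (Suc t) L w = msum t L w'"
      unfolding msum_def
    proof (intro sum.cong refl)
      fix x assume "x \<in> {..<length L}"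
      then have "birth (L ! x) \<le> t" using ok by auto
      then show "(if bandv (birth (L ! x)) (Suc t) < w then gg L x else 0) =
          (if bandv (birth (L ! x)) t < w' then gg L x else 0)" using eqb by simp
    qed
    also have "\<dots> \<le> NB l t (Suc t) w'" by (rule sm)
    also have "\<dots> = NB l (Suc t) (Suc t) w"
      unfolding NB_def
    proof (intro sum.cong refl)
      fix x assume "x \<in> {..<Suc t}"
      then have "x \<le> t" by auto
      then show "(if bandv x t < w' then cw l x else 0) = (if bandv x (Suc t) < w then cw l x else 0)"
        using eqb by simp
    qed
    finally show ?thesis .
  qed
  then show ?thesis using inv ok unfolding InvS_def InvR_def by auto
qed

lemma S_to_R: "InvS l (Suc t) l (L :: 'a entry list) \<Longrightarrow> InvR l (Suc t) L"
proof -
  assume inv: "InvS l (Suc t) l L"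
  have ok: "\<And>k. k < length L \<Longrightarrow> eok (Suc t) L k"
    and sm: "\<And>w. msum (Suc t) L w \<le> NB l (Suc t) (Suc t) w + (if 0 < w then int l else 0)"
    using inv unfolding InvS_def by auto
  have ok2: "eok (Suc (Suc t)) L k \<and> birth (L ! k) \<le> Suc t" if "k < length L" for k
    using ok[OF that] by (simp add: eok_def)
  have "NB l (Suc t) (Suc (Suc t)) w = NB l (Suc t) (Suc t) w + (if 0 < w then int l else 0)" for w
    unfolding NB_def by (simp add: bandv_zero cw_def)
  then show ?thesis using inv ok2 sm unfolding InvS_def InvR_def by auto
qed

lemma init_inv: "InvR l 0 [Entry None 1 1 0]"
  unfolding InvR_def eok_def msum_def NB_def gg_def Dl_def cw_def by simp

lemma chunk_len: "length (chunk xs l (Suc t)) = l"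
  unfolding chunk_def by simp

lemma reached_inv: "reached xs l t L \<Longrightarrow> InvR l t L \<and> (0 < t \<longrightarrow> \<not> (\<exists>L3. del_step t L L3))"
proof (induction rule: reached.induct)
  case init then show ?case using init_inv by simp
next
  case (step t L L1 L2)
  have "InvS l (Suc t) 0 L" using step R_to_S by blast
  then have "InvS l (Suc t) (0 + length (chunk xs l (Suc t))) L1" using step fold_inv by blast
  then have "InvS l (Suc t) l L1" by (simp add: chunk_len)
  then have "InvS l (Suc t) l L2" using step star_inv by blast
  then show ?case using S_to_R step by blast
qed



lemma sum_disj_le:
  fixes f :: "nat \<Rightarrow> int"
  assumes "finite A" "finite C" "\<And>k. k \<in> A \<Longrightarrow> J k \<subseteq> C"
    and "\<And>k k'. k \<in> A \<Longrightarrow> k' \<in> A \<Longrightarrow> k \<noteq> k' \<Longrightarrow> J k \<inter> J k' = {}"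
    and "\<And>q. q \<in> C \<Longrightarrow> 0 \<le> f q"
  shows "(\<Sum>k\<in>A. \<Sum>q\<in>J k. f q) \<le> (\<Sum>q\<in>C. f q)"
proof -
  have fin: "\<And>k. k \<in> A \<Longrightarrow> finite (J k)" using assms(2,3) finite_subset by blast
  have "(\<Sum>k\<in>A. \<Sum>q\<in>J k. f q) = (\<Sum>q\<in>(\<Union>k\<in>A. J k). f q)"
    by (rule sum.UNION_disjoint[symmetric]) (use assms fin in auto)
  also have "\<dots> \<le> (\<Sum>q\<in>C. f q)"
    using assms by (intro sum_mono2) auto
  finally show ?thesis .
qed

lemma NB_bound:
  assumes l: "1 \<le> l"
  shows "NB l t (Suc t) (Suc w) \<le> int l * 2 ^ Suc w"
proof -
  define A where "A = {b. b < Suc t \<and> t + 2 \<le> b + 2 ^ Suc w}"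
  have "NB l t (Suc t) (Suc w) \<le> (\<Sum>b<Suc t. if b \<in> A then int l else 0)"
    unfolding NB_def
  proof (rule sum_mono)
    fix b assume b: "b \<in> {..<Suc t}"
    show "(if bandv b t < Suc w then cw l b else 0) \<le> (if b \<in> A then int l else 0)"
    proof (cases "bandv b t < Suc w")
      case True
      have "t + 2 \<le> b + 2 ^ Suc (bandv b t)" using b bandv_up by simp
      also have "(2::nat) ^ Suc (bandv b t) \<le> 2 ^ Suc w" using True by (intro power_increasing) auto
      finally have "b \<in> A" using b A_def by auto
      then show ?thesis using True l by (simp add: cw_def)
    qed simp
  qed
  also have "\<dots> = (\<Sum>b\<in>A. int l)"
    by (subst sum.inter_filter[symmetric]) (auto simp: A_def intro!: sum.cong)
  also have "\<dots> = int l * int (card A)" by simp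
  also have "card A \<le> 2 ^ Suc w"
  proof -
    have "A \<subseteq> {t + 2 - 2 ^ Suc w..<Suc t}" unfolding A_def by auto
    then have "card A \<le> card {t + 2 - 2 ^ Suc w..<Suc t}" by (intro card_mono) auto
    also have "\<dots> \<le> 2 ^ Suc w" by simp
    finally show ?thesis .
  qed
  then have "int l * int (card A) \<le> int l * 2 ^ Suc w"
  proof -
    have "int (card A) \<le> int (2 ^ Suc w)" using \<open>card A \<le> 2 ^ Suc w\<close> by linarith
    then show ?thesis by (intro mult_left_mono) auto
  qed
  finally show ?thesis .
qed


definition Kset :: "nat \<Rightarrow> 'a entry list \<Rightarrow> nat set" where
  "Kset t L = {k. Suc k < length L \<and> band t (L ! k) \<le> band t (L ! Suc k)}"
definition Kw :: "nat \<Rightarrow> 'a entry list \<Rightarrow> nat \<Rightarrow> nat set" where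
  "Kw t L w = {k \<in> Kset t L. band t (L ! Suc k) = w}"
definition SS :: "nat \<Rightarrow> 'a entry list \<Rightarrow> nat \<Rightarrow> int" where
  "SS t L k = (\<Sum>q\<in>{seg_start t L k..k}. gg L q) + gg L (Suc k)"
definition Cw :: "nat \<Rightarrow> 'a entry list \<Rightarrow> nat \<Rightarrow> nat set" where
  "Cw t L w = {q. q < length L \<and> band t (L ! q) < Suc w}"

context
  fixes l t :: nat and L :: "'a entry list"
  assumes inv: "InvR l t L" and nd: "\<not> (\<exists>L3. del_step t L L3)" and l1: "1 \<le> l"
begin

lemma ok: "q < length L \<Longrightarrow> eok (Suc t) L q \<and> birth (L ! q) \<le> t"
  using inv unfolding InvR_def by auto

lemma lowS:
  assumes k: "k \<in> Kset t L"
  shows "(2::int) ^ band t (L ! Suc k) \<le> 2 * SS t L k"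
proof -
  have kL: "Suc k < length L" and bk: "band t (L ! k) \<le> band t (L ! Suc k)" using k by (auto simp: Kset_def)
  have ncond: "\<not> (gstar t L k + gg L (k + 1) + Dl L (k + 1) \<le> int t)"
  proof
    assume "gstar t L k + gg L (k + 1) + Dl L (k + 1) \<le> int t"
    then have "del_step t L (take (seg_start t L k) L @ drop (k + 1) L)"
      unfolding del_step_def using kL bk by auto
    then show False using nd by blast
  qed
  have ssk: "seg_start t L k \<le> k" by (rule seg_start_props(1))
  have "{seg_start t L k..k} = insert k {seg_start t L k..<k}" using ssk by auto
  then have Seq: "SS t L k = gstar t L k + gg L (k + 1)"
    unfolding SS_def gstar_def by simp
  define b where "b = birth (L ! Suc k)"
  have bt: "b \<le> t" and Db: "Dl L (Suc k) \<le> int b" using ok[OF kL] b_def by (auto simp: eok_def)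
  have gt: "int t - int b < SS t L k" using ncond Seq Db by simp
  define w where "w = band t (L ! Suc k)"
  have wb: "w = bandv b t" by (simp add: w_def b_def band_def)
  show ?thesis
  proof (cases "w = 0")
    case True then show ?thesis using gt bt w_def by simp
  next
    case False
    then have "b + 2 ^ (w - 1) \<le> t" using bandv_low[OF bt] wb by simp
    then have "int b + 2 ^ (w - 1) \<le> int t" by (metis of_nat_add of_nat_le_iff of_nat_numeral of_nat_power)
    then have "2 ^ (w - 1) < SS t L k" using gt by simp
    moreover have "(2::int) ^ w = 2 * 2 ^ (w - 1)" using False by (metis power_Suc Suc_pred' bot_nat_0.not_eq_extremum)
    ultimately show ?thesis using w_def by simp
  qed
qed

lemma msum_Cw: "msum t L (Suc w) = (\<Sum>q\<in>Cw t L w. gg L q)"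
  unfolding msum_def Cw_def band_def
  by (subst sum.inter_filter[symmetric]) (auto intro!: sum.cong)

lemma Cw_bound: "(\<Sum>q\<in>Cw t L w. gg L q) \<le> int l * 2 ^ Suc w"
proof -
  have "msum t L (Suc w) \<le> NB l t (Suc t) (Suc w)" using inv unfolding InvR_def by auto
  also have "\<dots> \<le> int l * 2 ^ Suc w" using NB_bound l1 by simp
  finally show ?thesis using msum_Cw by simp
qed

lemma gg_nn: "q \<in> Cw t L w \<Longrightarrow> 0 \<le> gg L q"
  using ok by (auto simp: Cw_def eok_def)

lemma disjJ:
  assumes k: "k \<in> Kw t L w" and k': "k' \<in> Kw t L w" and kk: "k + 2 \<le> k'"
  shows "{seg_start t L k..k} \<inter> {seg_start t L k'..k'} = {}"
proof (rule ccontr)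
  assume "\<not> ?thesis"
  then obtain q where q: "q \<le> k" "seg_start t L k' \<le> q" by auto
  have "band t (L ! Suc k) < band t (L ! k')"
    using seg_start_props(2)[of t L k' "Suc k"] q kk by simp
  moreover have "band t (L ! Suc k) = w" "band t (L ! k') \<le> w"
    using k k' by (auto simp: Kw_def Kset_def)
  ultimately show False by simp
qed

lemma J_sub: "k \<in> Kw t L w \<Longrightarrow> {seg_start t L k..k} \<subseteq> Cw t L w"
proof
  fix q assume k: "k \<in> Kw t L w" and q: "q \<in> {seg_start t L k..k}"
  have kL: "Suc k < length L" and bk: "band t (L ! k) \<le> w" using k by (auto simp: Kw_def Kset_def)
  have "band t (L ! q) \<le> band t (L ! k)"
  proof (cases "q < k")
    case True then show ?thesis using seg_start_props(2)[of t L k q] q by simp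
  next
    case False then show ?thesis using q by simp
  qed
  then show "q \<in> Cw t L w" using q kL bk by (auto simp: Cw_def)
qed

lemma finKw: "finite (Kw t L w)"
  by (rule finite_subset[of _ "{..<length L}"]) (auto simp: Kw_def Kset_def)

lemma finCw: "finite (Cw t L w)"
  by (rule finite_subset[of _ "{..<length L}"]) (auto simp: Cw_def)

lemma par_bound:
  assumes P: "P \<subseteq> Kw t L w" and par: "\<And>k k'. k \<in> P \<Longrightarrow> k' \<in> P \<Longrightarrow> k \<noteq> k' \<Longrightarrow> k + 2 \<le> k' \<or> k' + 2 \<le> k"
  shows "(\<Sum>k\<in>P. \<Sum>q\<in>{seg_start t L k..k}. gg L q) \<le> (\<Sum>q\<in>Cw t L w. gg L q)"
proof -
  have fP: "finite P" using P finKw by (rule finite_subset)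
  have sub: "\<And>k. k \<in> P \<Longrightarrow> {seg_start t L k..k} \<subseteq> Cw t L w"
  proof -
    fix k assume "k \<in> P" then have "k \<in> Kw t L w" using P by (simp add: subset_iff)
    then show "{seg_start t L k..k} \<subseteq> Cw t L w" by (rule J_sub)
  qed
  have dis: "{seg_start t L k..k} \<inter> {seg_start t L k'..k'} = {}"
    if a: "k \<in> P" "k' \<in> P" "k \<noteq> k'" for k k'
  proof -
    have kk: "k + 2 \<le> k' \<or> k' + 2 \<le> k" using par[OF a] .
    have kw: "k \<in> Kw t L w" "k' \<in> Kw t L w" using a(1,2) P by (auto dest: subsetD)
    from kk show ?thesis
    proof
      assume "k + 2 \<le> k'" then show ?thesis using disjJ[OF kw] by simp
    next
      assume "k' + 2 \<le> k" then show ?thesis using disjJ[OF kw(2) kw(1)] by (simp add: Int_commute)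
    qed
  qed
  show ?thesis
    by (rule sum_disj_le[where J="\<lambda>k. {seg_start t L k..k}", OF fP finCw sub dis gg_nn])
qed

lemma Kw_card: "int (card (Kw t L w)) \<le> 12 * int l"
proof -
  define K where "K = Kw t L w"
  define E where "E = {k \<in> K. even k}"
  define Od where "Od = {k \<in> K. odd k}"
  have finK: "finite K" unfolding K_def
    by (rule finite_subset[of _ "{..<length L}"]) (auto simp: Kw_def Kset_def)
  have KEO: "K = E \<union> Od" "E \<inter> Od = {}" by (auto simp: E_def Od_def)
  have finE: "finite E" "finite Od" using finK by (auto simp: E_def Od_def)
  define M where "M = (\<Sum>q\<in>Cw t L w. gg L q)"
  have sE: "(\<Sum>k\<in>E. \<Sum>q\<in>{seg_start t L k..k}. gg L q) \<le> M" unfolding M_def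
  proof (rule par_bound)
    show "E \<subseteq> Kw t L w" by (auto simp: E_def K_def)
    fix k k' assume "k \<in> E" "k' \<in> E" "k \<noteq> k'"
    then have "even k" "even k'" "k \<noteq> k'" by (auto simp: E_def)
    then show "k + 2 \<le> k' \<or> k' + 2 \<le> k" by presburger
  qed
  have sO: "(\<Sum>k\<in>Od. \<Sum>q\<in>{seg_start t L k..k}. gg L q) \<le> M" unfolding M_def
  proof (rule par_bound)
    show "Od \<subseteq> Kw t L w" by (auto simp: Od_def K_def)
    fix k k' assume "k \<in> Od" "k' \<in> Od" "k \<noteq> k'"
    then have "odd k" "odd k'" "k \<noteq> k'" by (auto simp: Od_def)
    then show "k + 2 \<le> k' \<or> k' + 2 \<le> k" by presburger
  qed
  have sS: "(\<Sum>k\<in>K. \<Sum>q\<in>{Suc k}. gg L q) \<le> M"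
  proof -
    have sub: "\<And>k. k \<in> K \<Longrightarrow> {Suc k} \<subseteq> Cw t L w" by (auto simp: K_def Kw_def Kset_def Cw_def)
    have dis: "\<And>k k'. k \<in> K \<Longrightarrow> k' \<in> K \<Longrightarrow> k \<noteq> k' \<Longrightarrow> {Suc k} \<inter> {Suc k'} = {}" by simp
    show ?thesis unfolding M_def by (rule sum_disj_le[where J="\<lambda>k. {Suc k}", OF finK finCw sub dis gg_nn])
  qed
  have "(\<Sum>k\<in>K. (2::int) ^ w) \<le> (\<Sum>k\<in>K. 2 * SS t L k)"
    by (intro sum_mono) (use lowS in \<open>auto simp: K_def Kw_def\<close>)
  also have "\<dots> = 2 * ((\<Sum>k\<in>K. \<Sum>q\<in>{seg_start t L k..k}. gg L q) + (\<Sum>k\<in>K. \<Sum>q\<in>{Suc k}. gg L q))"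
    by (simp add: SS_def sum_distrib_left sum.distrib)
  also have "(\<Sum>k\<in>K. \<Sum>q\<in>{seg_start t L k..k}. gg L q) =
      (\<Sum>k\<in>E. \<Sum>q\<in>{seg_start t L k..k}. gg L q) + (\<Sum>k\<in>Od. \<Sum>q\<in>{seg_start t L k..k}. gg L q)"
    unfolding KEO(1) by (rule sum.union_disjoint[OF finE KEO(2)])
  finally have "int (card K) * 2 ^ w \<le> 2 * (M + M + M)" using sE sO sS by simp
  also have "\<dots> = 6 * M" by simp
  also have "\<dots> \<le> 6 * (int l * 2 ^ Suc w)"
  proof -
    have "M \<le> int l * 2 ^ Suc w" unfolding M_def by (rule Cw_bound)
    then show ?thesis by (rule mult_left_mono) simp
  qed
  also have "\<dots> = (12 * int l) * 2 ^ w" by simp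
  finally have "int (card K) * 2 ^ w \<le> (12 * int l) * 2 ^ w" .
  then show ?thesis unfolding K_def by (rule mult_right_le_imp_le) simp
qed

lemma K_card: "card (Kset t L) \<le> 12 * l * (Suc (bandv 0 t))"
proof -
  define V where "V = bandv 0 t"
  have sub: "Kset t L \<subseteq> (\<Union>w\<in>{..V}. Kw t L w)"
  proof
    fix k assume k: "k \<in> Kset t L"
    have "band t (L ! Suc k) \<le> V" unfolding V_def band_def by (rule bandv_anti) simp
    then show "k \<in> (\<Union>w\<in>{..V}. Kw t L w)" using k by (auto simp: Kw_def)
  qed
  have "card (Kset t L) \<le> card (\<Union>w\<in>{..V}. Kw t L w)"
    by (rule card_mono[OF _ sub]) (auto intro!: finite_subset[of _ "{..<length L}"] simp: Kw_def Kset_def)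
  also have "\<dots> \<le> (\<Sum>w\<in>{..V}. card (Kw t L w))" by (rule card_UN_le) simp
  also have "\<dots> \<le> (\<Sum>w\<in>{..V}. 12 * l)"
  proof (intro sum_mono)
    fix w
    have "int (card (Kw t L w)) \<le> int (12 * l)" using Kw_card[of w] by simp
    then show "card (Kw t L w) \<le> 12 * l" by linarith
  qed
  also have "\<dots> = 12 * l * Suc V" by simp
  finally show ?thesis unfolding V_def .
qed

end



lemma V_bound:
  assumes t: "2 \<le> t"
  shows "real (Suc (bandv 0 t)) \<le> 3 * log 2 (real t)"
proof -
  define V where "V = bandv 0 t"
  have l1: "1 \<le> log 2 (real t)"
  proof -
    have "log 2 (2::real) \<le> log 2 (real t)" using t by (intro log_mono) auto
    then show ?thesis by simp
  qed
  show ?thesis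
  proof (cases "V = 0")
    case True then show ?thesis using l1 V_def by simp
  next
    case False
    then have "0 + 2 ^ (V - 1) \<le> t" using bandv_low[of 0 t] V_def by simp
    then have "real (2 ^ (V - 1)) \<le> real t" by linarith
    then have "log 2 (2 ^ (V - 1)) \<le> log 2 (real t)" by (intro log_mono) auto
    then have "real (V - 1) \<le> log 2 (real t)" by simp
    then have "real V \<le> log 2 (real t) + 1" using False by linarith
    then show ?thesis using l1 V_def by simp
  qed
qed

theorem mainTheorem7:
  "\<exists>C::real. \<forall>(xs :: nat \<Rightarrow> 'a::linorder) (l::nat) (t::nat) L.
     l \<ge> 1 \<longrightarrow> inj xs \<longrightarrow> t \<ge> 2 \<longrightarrow> reached xs l t L \<longrightarrow>
     real (num_type2 t L) \<le> C * real l * log 2 (real t)"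
proof (intro exI allI impI)
  fix xs :: "nat \<Rightarrow> 'a" and l t :: nat and L
  assume l: "1 \<le> l" and t: "2 \<le> t" and r: "reached xs l t L"
  have inv: "InvR l t L" and nd: "\<not> (\<exists>L3. del_step t L L3)" using reached_inv[OF r] t by auto
  have eq: "{k. k + 1 < length L \<and> \<not> type1 t L k} = Kset t L"
    by (auto simp: type1_def Kset_def)
  have "num_type2 t L \<le> 12 * l * Suc (bandv 0 t)"
    unfolding num_type2_def eq using K_card[OF inv nd l] .
  then have "real (num_type2 t L) \<le> 12 * real l * real (Suc (bandv 0 t))"
    by (metis of_nat_le_iff of_nat_mult of_nat_numeral)
  also have "\<dots> \<le> 12 * real l * (3 * log 2 (real t))"
    by (intro mult_left_mono V_bound t) auto
  finally show "real (num_type2 t L) \<le> 36 * real l * log 2 (real t)" by simp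
qed


end
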